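(* Let $k$ be a real division algebra, $\mathcal Z\subset k$ a discrete subring closed under conjugation, $(a_n)_{n\ge1}$ a sequence in $\mathcal Z$ and $x_0\in k$ with $x_n=T_{a_n}\cdots T_{a_1}x_0$ defined and $\|x_n\|<1$ for all $n\ge0$. Then for each $n$, \[\|T^{-1}_{a_1}\cdots T^{-1}_{a_n}0-x_0\|=\prod_{i=0}^n\|x_i\|\;\prod_{i=0}^{n-1}\|T^{-1}_{a_{i+1}}\cdots T^{-1}_{a_n}0\|,\] assuming the terms of the latter product are well-defined.
   Context: $k\in\{\mathbb{R},\mathbb{C},\mathbb{H},\mathbb{O}\}$, identified with $\mathbb{R}^d$ with Euclidean norm $\|x\|^2=x\overline x$. For $a\in\mathcal Z$, $T_ax=x^{-1}-a$ and $T_a^{-1}x=(x+a)^{-1}$. Discrete means discrete in $\mathbb{R}^d$. *)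

theory Defs
  imports "HOL-Analysis.Analysis"
begin

text \<open>A real normed division algebra with Euclidean norm: a finite-dimensional real
inner-product space with a unital bilinear multiplication whose Euclidean norm is
multiplicative.  By Hurwitz's theorem these are exactly R, C, H, O (identified with
R^d, d = 1,2,4,8, with the Euclidean norm).  Associativity is NOT assumed, so the
octonions are covered.\<close>

class euclidean_div_algebra = euclidean_space + times + one +
  assumes mult_scaleR_left_eda: "(r *\<^sub>R x) * y = r *\<^sub>R (x * y)"
      and mult_scaleR_right_eda: "x * (r *\<^sub>R y) = r *\<^sub>R (x * y)"
      and distrib_left_eda: "x * (y + z) = x * y + x * z"
      and distrib_right_eda: "(x + y) * z = x * z + y * z"
      and one_mult_eda: "1 * x = x"
      and mult_one_eda: "x * 1 = x"
      and norm_mult_eda: "norm (x * y) = norm x * norm y"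

definition cnj :: "'a::euclidean_div_algebra \<Rightarrow> 'a" where
  "cnj x = (2 * (x \<bullet> 1)) *\<^sub>R 1 - x"

text \<open>Inverse x^{-1} = conj(x) / |x|^2 (only meaningful for x \<noteq> 0).\<close>
definition dinv :: "'a::euclidean_div_algebra \<Rightarrow> 'a" where
  "dinv x = (1 / (norm x)\<^sup>2) *\<^sub>R cnj x"

definition is_subring :: "'a::euclidean_div_algebra set \<Rightarrow> bool" where
  "is_subring Z \<longleftrightarrow> 0 \<in> Z \<and> 1 \<in> Z \<and> (\<forall>x\<in>Z. \<forall>y\<in>Z. x + y \<in> Z \<and> x - y \<in> Z \<and> x * y \<in> Z)"

definition Tmap :: "'a::euclidean_div_algebra \<Rightarrow> 'a \<Rightarrow> 'a" where
  "Tmap a x = dinv x - a"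

definition Tinv :: "'a::euclidean_div_algebra \<Rightarrow> 'a \<Rightarrow> 'a" where
  "Tinv a x = dinv (x + a)"

text \<open>Forward orbit x_n = T_{a_n} ... T_{a_1} x_0 (T_{a_1} applied first).\<close>
definition orbit :: "(nat \<Rightarrow> 'a::euclidean_div_algebra) \<Rightarrow> 'a \<Rightarrow> nat \<Rightarrow> 'a" where
  "orbit a x0 n = fold (\<lambda>j y. Tmap (a j) y) [1..<Suc n] x0"

text \<open>Backward composition T^{-1}_{a_{i+1}} ... T^{-1}_{a_n} 0 (T^{-1}_{a_n} applied first);
equals 0 when i = n.\<close>
definition bwd :: "(nat \<Rightarrow> 'a::euclidean_div_algebra) \<Rightarrow> nat \<Rightarrow> nat \<Rightarrow> 'a" where
  "bwd a n i = foldr (\<lambda>j y. Tinv (a j) y) [Suc i..<Suc n] 0"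

end

theory Submission
  imports Defs
begin

lemma zero_mult_eda: "(0::'a::euclidean_div_algebra) * x = 0"
  using mult_scaleR_left_eda[of 0 "0::'a" x] by simp

lemma norm_one_eda: "norm (1::'a::euclidean_div_algebra) = 1"
proof -
  have h: "norm (1::'a) = norm (1::'a) * norm (1::'a)"
    using norm_mult_eda[of "1::'a" 1] by (simp add: one_mult_eda)
  show ?thesis
  proof (rule ccontr)
    assume "norm (1::'a) \<noteq> 1"
    with h have "norm (1::'a) = 0" by (metis mult_cancel_left2 mult.commute)
    hence o: "(1::'a) = 0" by simp
    obtain b :: 'a where b: "b \<in> Basis" using nonempty_Basis by blast
    have "b = 1 * b" by (simp add: one_mult_eda)
    also have "\<dots> = 0" using o zero_mult_eda by simp
    finally show False using b by (simp add: nonzero_Basis)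
  qed
qed

lemma inner_one_eda: "(1::'a::euclidean_div_algebra) \<bullet> 1 = 1"
  using norm_one_eda[where 'a='a] by (simp add: norm_eq_sqrt_inner)

lemma inner_cnj: "cnj x \<bullet> cnj (y::'a::euclidean_div_algebra) = x \<bullet> y"
  unfolding cnj_def
  by (simp add: inner_diff_left inner_diff_right inner_one_eda inner_commute algebra_simps)

lemma cnj_cnj: "cnj (cnj (x::'a::euclidean_div_algebra)) = x"
proof -
  have "cnj x \<bullet> 1 = x \<bullet> 1"
    unfolding cnj_def by (simp add: inner_diff_left inner_one_eda)
  thus ?thesis unfolding cnj_def by (simp add: algebra_simps inner_one_eda)
qed

lemma cnj_scaleR: "cnj (r *\<^sub>R (x::'a::euclidean_div_algebra)) = r *\<^sub>R cnj x"
  unfolding cnj_def by (simp add: algebra_simps)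

lemma norm_cnj: "norm (cnj (x::'a::euclidean_div_algebra)) = norm x"
  by (simp add: norm_eq_sqrt_inner inner_cnj)

lemma norm_dinv: "norm (dinv (x::'a::euclidean_div_algebra)) = 1 / norm x"
  unfolding dinv_def by (simp add: norm_cnj power2_eq_square)

lemma dinv_dinv: "(x::'a::euclidean_div_algebra) \<noteq> 0 \<Longrightarrow> dinv (dinv x) = x"
proof -
  assume x: "x \<noteq> 0"
  have "dinv (dinv x) = (norm x)\<^sup>2 *\<^sub>R cnj ((1 / (norm x)\<^sup>2) *\<^sub>R cnj x)"
    unfolding dinv_def[of "dinv x"] norm_dinv by (simp add: power_divide dinv_def)
  also have "\<dots> = ((norm x)\<^sup>2 * (1 / (norm x)\<^sup>2)) *\<^sub>R x"
    by (simp add: cnj_scaleR cnj_cnj)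
  finally show ?thesis using x by simp
qed

lemma norm_dinv_diff:
  assumes u: "(u::'a::euclidean_div_algebra) \<noteq> 0" and v: "v \<noteq> 0"
  shows "norm (dinv u - dinv v) = norm (u - v) / (norm u * norm v)"
proof -
  have nu: "norm u > 0" "norm v > 0" using u v by auto
  have "(norm (dinv u - dinv v))\<^sup>2 = (norm (u - v) / (norm u * norm v))\<^sup>2"
  proof -
    have "(norm (dinv u - dinv v))\<^sup>2 = dinv u \<bullet> dinv u + dinv v \<bullet> dinv v - 2 * (dinv u \<bullet> dinv v)"
      by (simp add: power2_norm_eq_inner inner_diff_left inner_diff_right inner_commute)
    also have "\<dots> = (u \<bullet> u) / ((norm u)\<^sup>2 * (norm u)\<^sup>2) + (v \<bullet> v) / ((norm v)\<^sup>2 * (norm v)\<^sup>2) - 2 * (u \<bullet> v) / ((norm u)\<^sup>2 * (norm v)\<^sup>2)"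
      unfolding dinv_def by (simp add: inner_cnj power2_eq_square)
    also have "\<dots> = ((norm v)\<^sup>2 + (norm u)\<^sup>2 - 2 * (u \<bullet> v)) / ((norm u)\<^sup>2 * (norm v)\<^sup>2)"
      using nu by (simp add: power2_norm_eq_inner[symmetric] field_simps power2_eq_square)
    also have "(norm v)\<^sup>2 + (norm u)\<^sup>2 - 2 * (u \<bullet> v) = (norm (u - v))\<^sup>2"
      by (simp add: power2_norm_eq_inner inner_diff_left inner_diff_right inner_commute)
    finally show ?thesis by (simp add: power_divide power_mult_distrib)
  qed
  thus ?thesis using nu by (simp add: power2_eq_iff_nonneg)
qed

lemma orbit_Suc: "orbit a x0 (Suc m) = Tmap (a (Suc m)) (orbit a x0 m)"
  unfolding orbit_def by simp

lemma bwd_n: "bwd a n n = 0"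
  unfolding bwd_def by simp

lemma bwd_step: "i < n \<Longrightarrow> bwd a n i = Tinv (a (Suc i)) (bwd a n (Suc i))"
  unfolding bwd_def by (subst upt_conv_Cons) auto

theorem lemma1p4:
  fixes Z :: "'a::euclidean_div_algebra set"
    and a :: "nat \<Rightarrow> 'a" and x0 :: 'a and n :: nat
  assumes "is_subring Z" and "discrete Z" and "\<forall>z\<in>Z. cnj z \<in> Z"
      and "\<forall>j\<ge>1. a j \<in> Z"
      and "\<forall>m. orbit a x0 m \<noteq> 0 \<and> norm (orbit a x0 m) < 1"
      and "\<forall>i<n. bwd a n (Suc i) + a (Suc i) \<noteq> 0"
  shows "norm (bwd a n 0 - x0) =
           (\<Prod>i=0..n. norm (orbit a x0 i)) * (\<Prod>i<n. norm (bwd a n i))"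
proof -
  note orb = assms(5) and bw = assms(6)
  have main: "norm (bwd a n (n - k) - orbit a x0 (n - k)) =
     (\<Prod>j=n-k..n. norm (orbit a x0 j)) * (\<Prod>j\<in>{n-k..<n}. norm (bwd a n j))"
    if "k \<le> n" for k
    using that
  proof (induction k)
    case 0
    then show ?case by (simp add: bwd_n)
  next
    case (Suc k)
    define i where "i = n - Suc k"
    have i: "i < n" "Suc i = n - k" using Suc.prems unfolding i_def by auto
    define u where "u = bwd a n (Suc i) + a (Suc i)"
    define v where "v = orbit a x0 (Suc i) + a (Suc i)"
    have u0: "u \<noteq> 0" using bw i unfolding u_def by auto
    have vx: "v = dinv (orbit a x0 i)" unfolding v_def orbit_Suc Tmap_def by simp
    have x0': "orbit a x0 i \<noteq> 0" using orb by auto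
    have v0: "v \<noteq> 0" using vx x0' norm_dinv[of "orbit a x0 i"] by auto
    have bi: "bwd a n i = dinv u" using bwd_step[of i n a, OF i(1)] unfolding u_def Tinv_def by simp
    have xi: "orbit a x0 i = dinv v" using vx dinv_dinv[OF x0'] by simp
    have nb: "norm (bwd a n i) = 1 / norm u" using bi norm_dinv by simp
    have nx: "norm (orbit a x0 i) = 1 / norm v" using xi norm_dinv by simp
    have uv: "u - v = bwd a n (Suc i) - orbit a x0 (Suc i)" unfolding u_def v_def by simp
    have IH: "norm (u - v) =
     (\<Prod>j=Suc i..n. norm (orbit a x0 j)) * (\<Prod>j\<in>{Suc i..<n}. norm (bwd a n j))"
      using Suc.IH Suc.prems uv i by simp
    have "norm (bwd a n i - orbit a x0 i) = norm (u - v) / (norm u * norm v)"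
      using bi xi norm_dinv_diff[OF u0 v0] by simp
    also have "\<dots> = (norm (orbit a x0 i) * (\<Prod>j=Suc i..n. norm (orbit a x0 j))) *
        (norm (bwd a n i) * (\<Prod>j\<in>{Suc i..<n}. norm (bwd a n j)))"
      unfolding IH nb nx by simp
    also have "\<dots> = (\<Prod>j=i..n. norm (orbit a x0 j)) * (\<Prod>j\<in>{i..<n}. norm (bwd a n j))"
      using i(1) by (simp add: prod.atLeast_Suc_atMost prod.atLeast_Suc_lessThan)
    finally show ?case unfolding i_def .
  qed
  have "orbit a x0 0 = x0" unfolding orbit_def by simp
  then show ?thesis using main[of n] by (simp add: atLeast0LessThan)
qed

end
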